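(* Let $(T_n)_{n\ge1}$ be an irreducible folding sequence of combinatorial trees. Then the sequence can be realized as a folding sequence of morphisms of simplicial $\mathbf{R}$–trees in which the groups act by isometries; that is, one can assign to every edge of every $T_n$ a positive real length, constant on $G_n$–orbits, such that whenever an edge of $T_n$ is subdivided to obtain $T_{n+1}$ the lengths of the resulting edges sum to the length of the subdivided edge, and whenever edges are folded together to obtain $T_{n+1}$ they have equal length, equal to the length of the resulting edge (other edges keeping their lengths).
   Context: A folding sequence $(T_n)$ is a sequence of combinatorial trees such that: (a) $T_n$ is a minimal $G_n$–tree for a finitely generated group $G_n$; (b) $T_{n+1}$ is obtained from $T_n$ either by a subdivision of a $G_n$–orbit of edges, or by a fold of Type I, II or III followed by a vertex morphism (with a homomorphism $G_n\to G_{n+1}$). Here a fold of a $G$–tree identifies, $G$–equivariantly, two edges $e_1\ne e_2$ with a common vertex $v$; Type I: the images of $e_1,e_2$ in $G\backslash T$ are distinct edges with distinct other endpoints; Type II: $e_2=ge_1$ for some $g$ in the stabilizer of $v$; Type III: the images of $e_1,e_2$ in the quotient are distinct but their other endpoints are in the same $G$–orbit. A vertex morphism is a morphism of trees whose only effect on the quotient graph of groups is to replace the group $U$ labelling one vertex by a quotient $V$ of $U$ via a surjection that is the identity on the incident edge groups. The sequence is reducible if there exists $n$ such that for every $m\ge n$ there is a proper $G_m$–invariant subset $E_m\subsetneq ET_m$ such that whenever the operation producing $T_{m+1}$ from $T_m$ involves an edge of $E_m$ (subdividing it, or folding it with another edge), all resulting edges lie in $E_{m+1}$; otherwise it is irreducible.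 *)

theory Defs
  imports "HOL-Algebra.Algebra"
begin

text \<open>A graph has vertex set, edge set, and for every edge an origin and a terminus
(each geometric edge carries a fixed orientation; the group acts preserving it,
i.e. without inversions).\<close>

record ('g, 'v, 'e) gtree =
  gt_grp  :: "'g monoid"
  gt_V    :: "'v set"
  gt_E    :: "'e set"
  gt_src  :: "'e \<Rightarrow> 'v"
  gt_tgt  :: "'e \<Rightarrow> 'v"
  gt_actV :: "'g \<Rightarrow> 'v \<Rightarrow> 'v"
  gt_actE :: "'g \<Rightarrow> 'e \<Rightarrow> 'e"

definition adj_rel :: "'e set \<Rightarrow> ('e \<Rightarrow> 'v) \<Rightarrow> ('e \<Rightarrow> 'v) \<Rightarrow> ('v \<times> 'v) set" where
  "adj_rel F s t = {(s e, t e) | e. e \<in> F} \<union> {(t e, s e) | e. e \<in> F}"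

text \<open>A (possibly infinite) tree: nonempty, connected, no loops, and every edge is a bridge
(equivalently: no cycles).\<close>
definition is_tree :: "'v set \<Rightarrow> 'e set \<Rightarrow> ('e \<Rightarrow> 'v) \<Rightarrow> ('e \<Rightarrow> 'v) \<Rightarrow> bool" where
  "is_tree V E s t \<longleftrightarrow> V \<noteq> {}
     \<and> (\<forall>e\<in>E. s e \<in> V \<and> t e \<in> V)
     \<and> (\<forall>u\<in>V. \<forall>w\<in>V. (u, w) \<in> (adj_rel E s t)\<^sup>*)
     \<and> (\<forall>e\<in>E. s e \<noteq> t e \<and> (s e, t e) \<notin> (adj_rel (E - {e}) s t)\<^sup>*)"

definition is_gtree :: "('g, 'v, 'e) gtree \<Rightarrow> bool" where
  "is_gtree T \<longleftrightarrow> (let G = gt_grp T; V = gt_V T; E = gt_E T; aV = gt_actV T; aE = gt_actE T in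
     group G \<and> is_tree V E (gt_src T) (gt_tgt T)
     \<and> (\<forall>g\<in>carrier G. bij_betw (aV g) V V \<and> bij_betw (aE g) E E)
     \<and> (\<forall>x\<in>V. aV \<one>\<^bsub>G\<^esub> x = x) \<and> (\<forall>e\<in>E. aE \<one>\<^bsub>G\<^esub> e = e)
     \<and> (\<forall>g\<in>carrier G. \<forall>h\<in>carrier G. \<forall>x\<in>V. aV (g \<otimes>\<^bsub>G\<^esub> h) x = aV g (aV h x))
     \<and> (\<forall>g\<in>carrier G. \<forall>h\<in>carrier G. \<forall>e\<in>E. aE (g \<otimes>\<^bsub>G\<^esub> h) e = aE g (aE h e))
     \<and> (\<forall>g\<in>carrier G. \<forall>e\<in>E. gt_src T (aE g e) = aV g (gt_src T e)
                                  \<and> gt_tgt T (aE g e) = aV g (gt_tgt T e)))"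

definition fin_gen :: "'g monoid \<Rightarrow> bool" where
  "fin_gen G \<longleftrightarrow> (\<exists>S. finite S \<and> S \<subseteq> carrier G \<and> generate G S = carrier G)"

definition minimal_gtree :: "('g, 'v, 'e) gtree \<Rightarrow> bool" where
  "minimal_gtree T \<longleftrightarrow> (\<forall>W F. W \<subseteq> gt_V T \<and> F \<subseteq> gt_E T \<and> W \<noteq> {}
       \<and> (\<forall>e\<in>F. gt_src T e \<in> W \<and> gt_tgt T e \<in> W)
       \<and> (\<forall>u\<in>W. \<forall>w\<in>W. (u, w) \<in> (adj_rel F (gt_src T) (gt_tgt T))\<^sup>*)
       \<and> (\<forall>g\<in>carrier (gt_grp T). gt_actV T g ` W \<subseteq> W \<and> gt_actE T g ` F \<subseteq> F)
     \<longrightarrow> W = gt_V T \<and> F = gt_E T)"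

definition orbitV :: "('g, 'v, 'e) gtree \<Rightarrow> 'v \<Rightarrow> 'v set" where
  "orbitV T x = (\<lambda>g. gt_actV T g x) ` carrier (gt_grp T)"

definition orbitE :: "('g, 'v, 'e) gtree \<Rightarrow> 'e \<Rightarrow> 'e set" where
  "orbitE T e = (\<lambda>g. gt_actE T g e) ` carrier (gt_grp T)"

definition stabV :: "('g, 'v, 'e) gtree \<Rightarrow> 'v \<Rightarrow> 'g set" where
  "stabV T x = {g \<in> carrier (gt_grp T). gt_actV T g x = x}"

definition stabE :: "('g, 'v, 'e) gtree \<Rightarrow> 'e \<Rightarrow> 'g set" where
  "stabE T e = {g \<in> carrier (gt_grp T). gt_actE T g e = e}"

definition other_end :: "('g, 'v, 'e) gtree \<Rightarrow> 'e \<Rightarrow> 'v \<Rightarrow> 'v" where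
  "other_end T e v = (if gt_src T e = v then gt_tgt T e else gt_src T e)"

section \<open>Folds\<close>

text \<open>The equivariant fold of e1 and e2 at v: the G-invariant equivalence relations on edges
and on vertices generated by g e1 ~ g e2 and g w1 ~ g w2 (wi the other endpoint of ei).\<close>
definition fold_relE :: "('g, 'v, 'e) gtree \<Rightarrow> 'e \<Rightarrow> 'e \<Rightarrow> ('e \<times> 'e) set" where
  "fold_relE T e1 e2 = (Id_on (gt_E T)
      \<union> {(gt_actE T g e1, gt_actE T g e2) | g. g \<in> carrier (gt_grp T)}
      \<union> {(gt_actE T g e2, gt_actE T g e1) | g. g \<in> carrier (gt_grp T)})\<^sup>*"

definition fold_relV :: "('g, 'v, 'e) gtree \<Rightarrow> 'v \<Rightarrow> 'e \<Rightarrow> 'e \<Rightarrow> ('v \<times> 'v) set" where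
  "fold_relV T v e1 e2 = (let w1 = other_end T e1 v; w2 = other_end T e2 v in
     (Id_on (gt_V T)
      \<union> {(gt_actV T g w1, gt_actV T g w2) | g. g \<in> carrier (gt_grp T)}
      \<union> {(gt_actV T g w2, gt_actV T g w1) | g. g \<in> carrier (gt_grp T)})\<^sup>*)"

definition fold_typeI :: "('g, 'v, 'e) gtree \<Rightarrow> 'v \<Rightarrow> 'e \<Rightarrow> 'e \<Rightarrow> bool" where
  "fold_typeI T v e1 e2 \<longleftrightarrow> e2 \<notin> orbitE T e1
      \<and> other_end T e2 v \<notin> orbitV T (other_end T e1 v)"

definition fold_typeII :: "('g, 'v, 'e) gtree \<Rightarrow> 'v \<Rightarrow> 'e \<Rightarrow> 'e \<Rightarrow> bool" where
  "fold_typeII T v e1 e2 \<longleftrightarrow> (\<exists>g\<in>stabV T v. e2 = gt_actE T g e1)"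

definition fold_typeIII :: "('g, 'v, 'e) gtree \<Rightarrow> 'v \<Rightarrow> 'e \<Rightarrow> 'e \<Rightarrow> bool" where
  "fold_typeIII T v e1 e2 \<longleftrightarrow> e2 \<notin> orbitE T e1
      \<and> other_end T e2 v \<in> orbitV T (other_end T e1 v)"

definition is_fold :: "('g, 'v, 'e) gtree \<Rightarrow> 'v \<Rightarrow> 'e \<Rightarrow> 'e \<Rightarrow> bool" where
  "is_fold T v e1 e2 \<longleftrightarrow> v \<in> gt_V T \<and> e1 \<in> gt_E T \<and> e2 \<in> gt_E T \<and> e1 \<noteq> e2
     \<and> v \<in> {gt_src T e1, gt_tgt T e1} \<and> v \<in> {gt_src T e2, gt_tgt T e2}
     \<and> (fold_typeI T v e1 e2 \<or> fold_typeII T v e1 e2 \<or> fold_typeIII T v e1 e2)"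

text \<open>T' is obtained from T by the fold of e1, e2 at v followed by a vertex morphism;
(h, phi, psi) is the composite morphism T \<rightarrow> T' (on group, vertices, edges).
The fold tree is described through representatives: its vertices/edges are the classes of
fold_relV / fold_relE; the stabiliser of a class [x] is {g. (g x, x) in fold_relV}.
The vertex morphism is a surjective equivariant morphism of trees inducing an isomorphism of
quotient graphs, an isomorphism on all edge groups and all vertex groups except those in one
orbit (vertex u0), where it is a surjection.\<close>
definition fold_step :: "('g, 'v, 'e) gtree \<Rightarrow> ('g, 'v, 'e) gtree \<Rightarrow> ('g \<Rightarrow> 'g)
    \<Rightarrow> ('v \<Rightarrow> 'v) \<Rightarrow> ('e \<Rightarrow> 'e) \<Rightarrow> bool" where
  "fold_step T T' h \<phi> \<psi> \<longleftrightarrow> (\<exists>v e1 e2. is_fold T v e1 e2 \<and>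
     (let G = gt_grp T; G' = gt_grp T'; RV = fold_relV T v e1 e2; RE = fold_relE T e1 e2 in
       h \<in> hom G G' \<and> h ` carrier G = carrier G'
     \<and> \<phi> ` gt_V T = gt_V T' \<and> \<psi> ` gt_E T = gt_E T'
     \<and> (\<forall>e\<in>gt_E T. {\<phi> (gt_src T e), \<phi> (gt_tgt T e)} = {gt_src T' (\<psi> e), gt_tgt T' (\<psi> e)})
     \<and> (\<forall>g\<in>carrier G. \<forall>x\<in>gt_V T. \<phi> (gt_actV T g x) = gt_actV T' (h g) (\<phi> x))
     \<and> (\<forall>g\<in>carrier G. \<forall>e\<in>gt_E T. \<psi> (gt_actE T g e) = gt_actE T' (h g) (\<psi> e))
     \<and> (\<forall>(x, y)\<in>RV. \<phi> x = \<phi> y) \<and> (\<forall>(e, f)\<in>RE. \<psi> e = \<psi> f)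
     \<and> (\<forall>x\<in>gt_V T. \<forall>y\<in>gt_V T. (\<exists>g'\<in>carrier G'. gt_actV T' g' (\<phi> x) = \<phi> y)
            \<longrightarrow> (\<exists>g\<in>carrier G. (gt_actV T g x, y) \<in> RV))
     \<and> (\<forall>e\<in>gt_E T. \<forall>f\<in>gt_E T. (\<exists>g'\<in>carrier G'. gt_actE T' g' (\<psi> e) = \<psi> f)
            \<longrightarrow> (\<exists>g\<in>carrier G. (gt_actE T g e, f) \<in> RE))
     \<and> (\<exists>u0\<in>gt_V T. \<forall>x\<in>gt_V T.
            h ` {g \<in> carrier G. (gt_actV T g x, x) \<in> RV} = stabV T' (\<phi> x)
          \<and> ((\<forall>g\<in>carrier G. (gt_actV T g u0, x) \<notin> RV)
               \<longrightarrow> inj_on h {g \<in> carrier G. (gt_actV T g x, x) \<in> RV}))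
     \<and> (\<forall>e\<in>gt_E T.
            h ` {g \<in> carrier G. (gt_actE T g e, e) \<in> RE} = stabE T' (\<psi> e)
          \<and> inj_on h {g \<in> carrier G. (gt_actE T g e, e) \<in> RE})))"

section \<open>Subdivisions\<close>

text \<open>T' is obtained from T by subdividing every edge of the G-orbit of e0 into k \<ge> 2 edges;
the group is unchanged. par maps each edge of T' to the edge of T it comes from.\<close>
definition subdiv_step :: "('g, 'v, 'e) gtree \<Rightarrow> ('g, 'v, 'e) gtree \<Rightarrow> ('e \<Rightarrow> 'e) \<Rightarrow> bool" where
  "subdiv_step T T' par \<longleftrightarrow> gt_grp T' = gt_grp T \<and>
    (\<exists>e0 (k::nat) \<phi> piece mid. e0 \<in> gt_E T \<and> k \<ge> 2 \<and>
     (let G = gt_grp T; Orb = orbitE T e0;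
          pt = (\<lambda>e i. if i = 0 then \<phi> (gt_src T e) else if i = k then \<phi> (gt_tgt T e) else mid e i) in
       inj_on \<phi> (gt_V T) \<and> \<phi> ` gt_V T \<subseteq> gt_V T'
     \<and> (\<forall>e'\<in>gt_E T'. par e' \<in> gt_E T)
     \<and> (\<forall>e\<in>gt_E T - Orb. \<exists>!e'. e' \<in> gt_E T' \<and> par e' = e)
     \<and> (\<forall>e\<in>gt_E T - Orb. \<forall>e'\<in>gt_E T'. par e' = e \<longrightarrow>
           gt_src T' e' = \<phi> (gt_src T e) \<and> gt_tgt T' e' = \<phi> (gt_tgt T e))
     \<and> (\<forall>e\<in>Orb. {e' \<in> gt_E T'. par e' = e} = piece e ` {..<k} \<and> inj_on (piece e) {..<k}
           \<and> (\<forall>i<k. gt_src T' (piece e i) = pt e i \<and> gt_tgt T' (piece e i) = pt e (Suc i)))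
     \<and> gt_V T' = \<phi> ` gt_V T \<union> {mid e i | e i. e \<in> Orb \<and> 0 < i \<and> i < k}
     \<and> inj_on (\<lambda>(e, i). mid e i) (Orb \<times> {1..<k})
     \<and> (\<forall>e\<in>Orb. \<forall>i\<in>{1..<k}. mid e i \<notin> \<phi> ` gt_V T)
     \<and> (\<forall>g\<in>carrier G. \<forall>x\<in>gt_V T. gt_actV T' g (\<phi> x) = \<phi> (gt_actV T g x))
     \<and> (\<forall>g\<in>carrier G. \<forall>e'\<in>gt_E T'. par (gt_actE T' g e') = gt_actE T g (par e'))
     \<and> (\<forall>g\<in>carrier G. \<forall>e\<in>Orb. \<forall>i<k. gt_actE T' g (piece e i) = piece (gt_actE T g e) i)
     \<and> (\<forall>g\<in>carrier G. \<forall>e\<in>Orb. \<forall>i\<in>{1..<k}. gt_actV T' g (mid e i) = mid (gt_actE T g e) i)))"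

section \<open>Folding sequences\<close>

text \<open>A folding sequence together with its morphisms: at step n, either (fs_sub n) T(n+1) is a
subdivision of T(n) with parent map fs_parent n, or T(n+1) is obtained by a fold followed by a
vertex morphism, whose edge map is fs_emap n.\<close>
record ('g, 'v, 'e) fseq =
  fs_tree   :: "nat \<Rightarrow> ('g, 'v, 'e) gtree"
  fs_sub    :: "nat \<Rightarrow> bool"
  fs_emap   :: "nat \<Rightarrow> 'e \<Rightarrow> 'e"
  fs_parent :: "nat \<Rightarrow> 'e \<Rightarrow> 'e"

definition folding_sequence :: "('g, 'v, 'e) fseq \<Rightarrow> bool" where
  "folding_sequence S \<longleftrightarrow> (\<forall>n. is_gtree (fs_tree S n) \<and> fin_gen (gt_grp (fs_tree S n))
     \<and> minimal_gtree (fs_tree S n)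
     \<and> (if fs_sub S n then subdiv_step (fs_tree S n) (fs_tree S (Suc n)) (fs_parent S n)
        else (\<exists>h \<phi>. fold_step (fs_tree S n) (fs_tree S (Suc n)) h \<phi> (fs_emap S n))))"

definition results :: "('g, 'v, 'e) fseq \<Rightarrow> nat \<Rightarrow> 'e \<Rightarrow> 'e set" where
  "results S n e = (if fs_sub S n
     then {e' \<in> gt_E (fs_tree S (Suc n)). fs_parent S n e' = e}
     else {fs_emap S n e})"

definition reducible_fseq :: "('g, 'v, 'e) fseq \<Rightarrow> bool" where
  "reducible_fseq S \<longleftrightarrow> (\<exists>N. \<exists>Es :: nat \<Rightarrow> 'e set. \<forall>m\<ge>N.
      Es m \<subset> gt_E (fs_tree S m) \<and> Es m \<noteq> {}
    \<and> (\<forall>g\<in>carrier (gt_grp (fs_tree S m)). gt_actE (fs_tree S m) g ` Es m \<subseteq> Es m)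
    \<and> (\<forall>e\<in>Es m. results S m e \<subseteq> Es (Suc m)))"

definition irreducible_fseq :: "('g, 'v, 'e) fseq \<Rightarrow> bool" where
  "irreducible_fseq S \<longleftrightarrow> \<not> reducible_fseq S"

end

theory Submission
  imports Defs "HOL-Analysis.Analysis"
begin

lemma gtD:
  assumes "is_gtree T"
  shows gtD_group: "group (gt_grp T)"
    and gtD_tree: "is_tree (gt_V T) (gt_E T) (gt_src T) (gt_tgt T)"
    and gtD_bijV: "\<And>g. g \<in> carrier (gt_grp T) \<Longrightarrow> bij_betw (gt_actV T g) (gt_V T) (gt_V T)"
    and gtD_bijE: "\<And>g. g \<in> carrier (gt_grp T) \<Longrightarrow> bij_betw (gt_actE T g) (gt_E T) (gt_E T)"
    and gtD_oneV: "\<And>x. x \<in> gt_V T \<Longrightarrow> gt_actV T \<one>\<^bsub>gt_grp T\<^esub> x = x"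
    and gtD_oneE: "\<And>e. e \<in> gt_E T \<Longrightarrow> gt_actE T \<one>\<^bsub>gt_grp T\<^esub> e = e"
    and gtD_multV: "\<And>g h x. g \<in> carrier (gt_grp T) \<Longrightarrow> h \<in> carrier (gt_grp T) \<Longrightarrow> x \<in> gt_V T
        \<Longrightarrow> gt_actV T (g \<otimes>\<^bsub>gt_grp T\<^esub> h) x = gt_actV T g (gt_actV T h x)"
    and gtD_multE: "\<And>g h e. g \<in> carrier (gt_grp T) \<Longrightarrow> h \<in> carrier (gt_grp T) \<Longrightarrow> e \<in> gt_E T
        \<Longrightarrow> gt_actE T (g \<otimes>\<^bsub>gt_grp T\<^esub> h) e = gt_actE T g (gt_actE T h e)"
    and gtD_src: "\<And>g e. g \<in> carrier (gt_grp T) \<Longrightarrow> e \<in> gt_E T \<Longrightarrow>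
        gt_src T (gt_actE T g e) = gt_actV T g (gt_src T e)"
    and gtD_tgt: "\<And>g e. g \<in> carrier (gt_grp T) \<Longrightarrow> e \<in> gt_E T \<Longrightarrow>
        gt_tgt T (gt_actE T g e) = gt_actV T g (gt_tgt T e)"
  using assms unfolding is_gtree_def Let_def by auto

lemma gt_actE_in: "is_gtree T \<Longrightarrow> g \<in> carrier (gt_grp T) \<Longrightarrow> e \<in> gt_E T \<Longrightarrow> gt_actE T g e \<in> gt_E T"
  by (rule bij_betwE[OF gtD_bijE, rule_format])

lemma gt_actV_in: "is_gtree T \<Longrightarrow> g \<in> carrier (gt_grp T) \<Longrightarrow> x \<in> gt_V T \<Longrightarrow> gt_actV T g x \<in> gt_V T"
  by (rule bij_betwE[OF gtD_bijV, rule_format])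

lemma adj_mono: "A \<subseteq> B \<Longrightarrow> adj_rel A s t \<subseteq> adj_rel B s t"
  unfolding adj_rel_def by blast

lemma adj_rtr_mono: "A \<subseteq> B \<Longrightarrow> (x, y) \<in> (adj_rel A s t)\<^sup>* \<Longrightarrow> (x, y) \<in> (adj_rel B s t)\<^sup>*"
  using rtrancl_mono[OF adj_mono] by blast

lemma adj_sym: "(x, y) \<in> (adj_rel A s t)\<^sup>* \<Longrightarrow> (y, x) \<in> (adj_rel A s t)\<^sup>*"
proof (induction rule: rtrancl_induct)
  case base
  then show ?case by simp
next
  case (step y z)
  then have "(z, y) \<in> adj_rel A s t" unfolding adj_rel_def by blast
  then show ?case using step(3) by (rule converse_rtrancl_into_rtrancl)
qed

lemma adj_edge:
  assumes "e \<in> A" "(y = s e \<and> z = t e) \<or> (y = t e \<and> z = s e)"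
  shows "(y, z) \<in> adj_rel A s t"
proof -
  have 1: "(s e, t e) \<in> adj_rel A s t" unfolding adj_rel_def using assms(1) by blast
  have 2: "(t e, s e) \<in> adj_rel A s t" unfolding adj_rel_def using assms(1) by blast
  from assms(2) show ?thesis
  proof (elim disjE conjE)
    assume "y = s e" "z = t e" then show ?thesis using 1 by simp
  next
    assume "y = t e" "z = s e" then show ?thesis using 2 by simp
  qed
qed

lemma adj_edgeD:
  assumes "(y, z) \<in> adj_rel A s t"
  obtains e where "e \<in> A" "(y = s e \<and> z = t e) \<or> (y = t e \<and> z = s e)"
  using assms unfolding adj_rel_def by blast

lemma walk_finite:
  assumes "(u, w) \<in> (adj_rel E s t)\<^sup>*"
  shows "\<exists>P. finite P \<and> P \<subseteq> E \<and> (u, w) \<in> (adj_rel P s t)\<^sup>*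
           \<and> (\<forall>e\<in>P. (u, s e) \<in> (adj_rel P s t)\<^sup>* \<and> (u, t e) \<in> (adj_rel P s t)\<^sup>*)"
  using assms
proof (induction rule: rtrancl_induct)
  case base
  show ?case by (rule exI[of _ "{}"]) simp
next
  case (step y z)
  then obtain P where P: "finite P" "P \<subseteq> E" "(u, y) \<in> (adj_rel P s t)\<^sup>*"
    "\<forall>e\<in>P. (u, s e) \<in> (adj_rel P s t)\<^sup>* \<and> (u, t e) \<in> (adj_rel P s t)\<^sup>*" by blast
  from step(2) obtain e where e: "e \<in> E" "(y = s e \<and> z = t e) \<or> (y = t e \<and> z = s e)"
    by (rule adj_edgeD)
  define Q where "Q = insert e P"
  have sub: "P \<subseteq> Q" unfolding Q_def by blast
  have uy: "(u, y) \<in> (adj_rel Q s t)\<^sup>*" using adj_rtr_mono[OF sub P(3)] .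
  have yz: "(y, z) \<in> adj_rel Q s t" using e(2) by (rule adj_edge[rotated]) (simp add: Q_def)
  have uz: "(u, z) \<in> (adj_rel Q s t)\<^sup>*" using uy yz by (rule rtrancl_into_rtrancl)
  have ue: "(u, s e) \<in> (adj_rel Q s t)\<^sup>* \<and> (u, t e) \<in> (adj_rel Q s t)\<^sup>*"
    using e(2)
  proof (elim disjE conjE)
    assume "y = s e" "z = t e" then show ?thesis using uy uz by simp
  next
    assume "y = t e" "z = s e" then show ?thesis using uy uz by simp
  qed
  have all: "\<forall>f\<in>Q. (u, s f) \<in> (adj_rel Q s t)\<^sup>* \<and> (u, t f) \<in> (adj_rel Q s t)\<^sup>*"
  proof
    fix f assume "f \<in> Q"
    then have "f = e \<or> f \<in> P" unfolding Q_def by simp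
    then show "(u, s f) \<in> (adj_rel Q s t)\<^sup>* \<and> (u, t f) \<in> (adj_rel Q s t)\<^sup>*"
    proof
      assume "f = e" then show ?thesis using ue by simp
    next
      assume f: "f \<in> P"
      then have "(u, s f) \<in> (adj_rel P s t)\<^sup>*" "(u, t f) \<in> (adj_rel P s t)\<^sup>*" using P(4) by auto
      moreover have "(adj_rel P s t)\<^sup>* \<subseteq> (adj_rel Q s t)\<^sup>*"
        by (rule rtrancl_mono[OF adj_mono[OF sub]])
      ultimately show ?thesis by blast
    qed
  qed
  have fin: "finite Q" using P(1) unfolding Q_def by simp
  have QE: "Q \<subseteq> E" using P(2) e(1) unfolding Q_def by simp
  show ?case by (rule exI[of _ Q]) (intro conjI fin QE uz all)
qed

lemma adj_equiv:
  assumes T: "is_gtree T" and g: "g \<in> carrier (gt_grp T)" and A: "A \<subseteq> gt_E T"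
    and xy: "(x, y) \<in> (adj_rel A (gt_src T) (gt_tgt T))\<^sup>*"
  shows "(gt_actV T g x, gt_actV T g y) \<in> (adj_rel (gt_actE T g ` A) (gt_src T) (gt_tgt T))\<^sup>*"
  using xy
proof (induction rule: rtrancl_induct)
  case base
  then show ?case by simp
next
  case (step y z)
  from step(2) obtain e where e: "e \<in> A" "(y = gt_src T e \<and> z = gt_tgt T e) \<or> (y = gt_tgt T e \<and> z = gt_src T e)"
    unfolding adj_rel_def by blast
  have eE: "e \<in> gt_E T" using e(1) A by blast
  have "(gt_actV T g y, gt_actV T g z) \<in> adj_rel (gt_actE T g ` A) (gt_src T) (gt_tgt T)"
  proof -
    let ?f = "gt_actE T g e"
    have f: "?f \<in> gt_actE T g ` A" using e(1) by blast
    have 1: "(gt_src T ?f, gt_tgt T ?f) \<in> adj_rel (gt_actE T g ` A) (gt_src T) (gt_tgt T)"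
      unfolding adj_rel_def using f by blast
    have 2: "(gt_tgt T ?f, gt_src T ?f) \<in> adj_rel (gt_actE T g ` A) (gt_src T) (gt_tgt T)"
      unfolding adj_rel_def using f by blast
    note eqs = gtD_src[OF T g eE] gtD_tgt[OF T g eE]
    from e(2) show ?thesis
    proof (elim disjE conjE)
      assume "y = gt_src T e" "z = gt_tgt T e" then show ?thesis using 1 unfolding eqs by simp
    next
      assume "y = gt_tgt T e" "z = gt_src T e" then show ?thesis using 2 unfolding eqs by simp
    qed
  qed
  then show ?case by (rule rtrancl_into_rtrancl[OF step(3)])
qed

lemma finite_orbits:
  assumes T: "is_gtree T" and fg: "fin_gen (gt_grp T)" and mn: "minimal_gtree T"
  shows "\<exists>R. finite R \<and> R \<subseteq> gt_E T \<and>
           (\<forall>e\<in>gt_E T. \<exists>g\<in>carrier (gt_grp T). \<exists>r\<in>R. e = gt_actE T g r)"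
proof -
  interpret G: group "gt_grp T" by (rule gtD_group[OF T])
  note tree = gtD_tree[OF T]
  obtain x where x: "x \<in> gt_V T" using tree unfolding is_tree_def by blast
  have conn: "\<forall>u\<in>gt_V T. \<forall>w\<in>gt_V T. (u, w) \<in> (adj_rel (gt_E T) (gt_src T) (gt_tgt T))\<^sup>*"
    using tree unfolding is_tree_def by blast
  have ends: "\<forall>e\<in>gt_E T. gt_src T e \<in> gt_V T \<and> gt_tgt T e \<in> gt_V T"
    using tree unfolding is_tree_def by blast
  from fg obtain Sg where Sg: "finite Sg" "Sg \<subseteq> carrier (gt_grp T)" "generate (gt_grp T) Sg = carrier (gt_grp T)"
    unfolding fin_gen_def by blast
  have "\<forall>s\<in>Sg. \<exists>P. finite P \<and> P \<subseteq> gt_E T \<and> (x, gt_actV T s x) \<in> (adj_rel P (gt_src T) (gt_tgt T))\<^sup>*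
           \<and> (\<forall>e\<in>P. (x, gt_src T e) \<in> (adj_rel P (gt_src T) (gt_tgt T))\<^sup>*
                   \<and> (x, gt_tgt T e) \<in> (adj_rel P (gt_src T) (gt_tgt T))\<^sup>*)"
  proof
    fix s assume "s \<in> Sg"
    then have "s \<in> carrier (gt_grp T)" using Sg(2) by blast
    then have "gt_actV T s x \<in> gt_V T" using gt_actV_in[OF T _ x] by blast
    then have "(x, gt_actV T s x) \<in> (adj_rel (gt_E T) (gt_src T) (gt_tgt T))\<^sup>*" using conn x by blast
    then show "\<exists>P. finite P \<and> P \<subseteq> gt_E T \<and> (x, gt_actV T s x) \<in> (adj_rel P (gt_src T) (gt_tgt T))\<^sup>*
           \<and> (\<forall>e\<in>P. (x, gt_src T e) \<in> (adj_rel P (gt_src T) (gt_tgt T))\<^sup>*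
                   \<and> (x, gt_tgt T e) \<in> (adj_rel P (gt_src T) (gt_tgt T))\<^sup>*)"
      by (rule walk_finite)
  qed
  from bchoice[OF this] obtain P where P: "\<forall>s\<in>Sg. finite (P s) \<and> P s \<subseteq> gt_E T
       \<and> (x, gt_actV T s x) \<in> (adj_rel (P s) (gt_src T) (gt_tgt T))\<^sup>*
       \<and> (\<forall>e\<in>P s. (x, gt_src T e) \<in> (adj_rel (P s) (gt_src T) (gt_tgt T))\<^sup>*
                   \<and> (x, gt_tgt T e) \<in> (adj_rel (P s) (gt_src T) (gt_tgt T))\<^sup>*)" by blast
  define F0 where "F0 = (\<Union>s\<in>Sg. P s)"
  define F where "F = {gt_actE T g f | g f. g \<in> carrier (gt_grp T) \<and> f \<in> F0}"
  define W where "W = {gt_actV T g x | g. g \<in> carrier (gt_grp T)} \<union> gt_src T ` F \<union> gt_tgt T ` F"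
  have F0E: "F0 \<subseteq> gt_E T" using P unfolding F0_def by blast
  have finF0: "finite F0" using P Sg(1) unfolding F0_def by (intro finite_UN_I) auto
  have FE: "F \<subseteq> gt_E T" unfolding F_def using F0E gt_actE_in[OF T] by blast
  have F0F: "F0 \<subseteq> F"
  proof
    fix f assume f: "f \<in> F0"
    then have "f = gt_actE T \<one>\<^bsub>gt_grp T\<^esub> f" using gtD_oneE[OF T] F0E by auto
    then show "f \<in> F" unfolding F_def using f by blast
  qed
  have Finv: "gt_actE T g ` A \<subseteq> F" if g: "g \<in> carrier (gt_grp T)" and A: "A \<subseteq> F" for g A
  proof
    fix e assume "e \<in> gt_actE T g ` A"
    then obtain a where a: "a \<in> A" "e = gt_actE T g a" by blast
    then obtain h f where hf: "h \<in> carrier (gt_grp T)" "f \<in> F0" "a = gt_actE T h f"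
      using A unfolding F_def by blast
    have "e = gt_actE T (g \<otimes>\<^bsub>gt_grp T\<^esub> h) f"
      using gtD_multE[OF T g hf(1)] hf F0E a by auto
    then show "e \<in> F" unfolding F_def using g hf by blast
  qed
  have adjF: "(u, w) \<in> (adj_rel F (gt_src T) (gt_tgt T))\<^sup>*"
    if g: "g \<in> carrier (gt_grp T)" and A: "A \<subseteq> F"
      and uw: "(u', w') \<in> (adj_rel A (gt_src T) (gt_tgt T))\<^sup>*"
      and u: "u = gt_actV T g u'" and w: "w = gt_actV T g w'" for g A u w u' w'
  proof -
    have "(u, w) \<in> (adj_rel (gt_actE T g ` A) (gt_src T) (gt_tgt T))\<^sup>*"
      unfolding u w using adj_equiv[OF T g _ uw] A FE by blast
    moreover have "(adj_rel (gt_actE T g ` A) (gt_src T) (gt_tgt T))\<^sup>* \<subseteq> (adj_rel F (gt_src T) (gt_tgt T))\<^sup>*"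
      by (rule rtrancl_mono[OF adj_mono[OF Finv[OF g A]]])
    ultimately show ?thesis by blast
  qed
  have path: "(x, gt_actV T g x) \<in> (adj_rel F (gt_src T) (gt_tgt T))\<^sup>*" if g: "g \<in> carrier (gt_grp T)" for g
  proof -
    have "g \<in> generate (gt_grp T) Sg" using g Sg(3) by simp
    then show ?thesis
    proof (induction rule: generate.induct)
      case one
      then show ?case using gtD_oneV[OF T x] by simp
    next
      case (incl s)
      then have "(x, gt_actV T s x) \<in> (adj_rel (P s) (gt_src T) (gt_tgt T))\<^sup>*" using P by blast
      moreover have "P s \<subseteq> F" using incl F0F unfolding F0_def by blast
      moreover have "(adj_rel (P s) (gt_src T) (gt_tgt T))\<^sup>* \<subseteq> (adj_rel F (gt_src T) (gt_tgt T))\<^sup>*"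
        by (rule rtrancl_mono[OF adj_mono[OF calculation(2)]])
      ultimately show ?case by blast
    next
      case (inv s)
      have s: "s \<in> carrier (gt_grp T)" using inv Sg(2) by blast
      have si: "inv\<^bsub>gt_grp T\<^esub> s \<in> carrier (gt_grp T)" using s by simp
      have "(x, gt_actV T s x) \<in> (adj_rel (P s) (gt_src T) (gt_tgt T))\<^sup>*" using P inv by blast
      moreover have "P s \<subseteq> F" using inv F0F unfolding F0_def by blast
      moreover have "(adj_rel (P s) (gt_src T) (gt_tgt T))\<^sup>* \<subseteq> (adj_rel F (gt_src T) (gt_tgt T))\<^sup>*"
        by (rule rtrancl_mono[OF adj_mono[OF calculation(2)]])
      ultimately have xs: "(x, gt_actV T s x) \<in> (adj_rel F (gt_src T) (gt_tgt T))\<^sup>*" by blast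
      have "gt_actV T (inv\<^bsub>gt_grp T\<^esub> s) (gt_actV T s x) = gt_actV T (inv\<^bsub>gt_grp T\<^esub> s \<otimes>\<^bsub>gt_grp T\<^esub> s) x"
        using gtD_multV[OF T si s x] by simp
      also have "\<dots> = x" using s gtD_oneV[OF T x] by simp
      finally have eq: "gt_actV T (inv\<^bsub>gt_grp T\<^esub> s) (gt_actV T s x) = x" .
      have "(gt_actV T (inv\<^bsub>gt_grp T\<^esub> s) x, x) \<in> (adj_rel F (gt_src T) (gt_tgt T))\<^sup>*"
        by (rule adjF[OF si order.refl xs refl eq[symmetric]])
      then show ?case by (rule adj_sym)
    next
      case (eng h1 h2)
      have h1: "h1 \<in> carrier (gt_grp T)" and h2: "h2 \<in> carrier (gt_grp T)" using eng Sg(3) by auto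
      have "(gt_actV T h1 x, gt_actV T h1 (gt_actV T h2 x)) \<in> (adj_rel F (gt_src T) (gt_tgt T))\<^sup>*"
        by (rule adjF[OF h1 order.refl eng.IH(2) refl refl])
      then have "(x, gt_actV T h1 (gt_actV T h2 x)) \<in> (adj_rel F (gt_src T) (gt_tgt T))\<^sup>*"
        using eng.IH(1) by (rule rtrancl_trans[rotated])
      then show ?case using gtD_multV[OF T h1 h2 x] by simp
    qed
  qed
  have Wconn: "(x, w) \<in> (adj_rel F (gt_src T) (gt_tgt T))\<^sup>*" if w: "w \<in> W" for w
  proof -
    have endp: "(x, v) \<in> (adj_rel F (gt_src T) (gt_tgt T))\<^sup>*"
      if f': "f' \<in> F" and v: "v = gt_src T f' \<or> v = gt_tgt T f'" for f' v
    proof -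
      obtain g f where gf: "g \<in> carrier (gt_grp T)" "f \<in> F0" "f' = gt_actE T g f"
        using f' unfolding F_def by blast
      obtain s where s: "s \<in> Sg" "f \<in> P s" using gf(2) unfolding F0_def by blast
      have PsF: "P s \<subseteq> F" using s(1) F0F unfolding F0_def by blast
      have fE: "f \<in> gt_E T" using gf(2) F0E by blast
      have xf: "(x, gt_src T f) \<in> (adj_rel (P s) (gt_src T) (gt_tgt T))\<^sup>*"
               "(x, gt_tgt T f) \<in> (adj_rel (P s) (gt_src T) (gt_tgt T))\<^sup>*" using P s by blast+
      have "(gt_actV T g x, v) \<in> (adj_rel F (gt_src T) (gt_tgt T))\<^sup>*"
        using v
      proof
        assume "v = gt_src T f'"
        then have "v = gt_actV T g (gt_src T f)" using gtD_src[OF T gf(1) fE] gf(3) by simp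
        then show ?thesis by (rule adjF[OF gf(1) PsF xf(1) refl])
      next
        assume "v = gt_tgt T f'"
        then have "v = gt_actV T g (gt_tgt T f)" using gtD_tgt[OF T gf(1) fE] gf(3) by simp
        then show ?thesis by (rule adjF[OF gf(1) PsF xf(2) refl])
      qed
      then show ?thesis using path[OF gf(1)] by (rule rtrancl_trans[rotated])
    qed
    from w show ?thesis unfolding W_def
    proof (elim UnE)
      assume "w \<in> {gt_actV T g x | g. g \<in> carrier (gt_grp T)}"
      then show ?thesis using path by blast
    next
      assume "w \<in> gt_src T ` F" then show ?thesis using endp by blast
    next
      assume "w \<in> gt_tgt T ` F" then show ?thesis using endp by blast
    qed
  qed
  have H: "W \<subseteq> gt_V T \<and> F \<subseteq> gt_E T \<and> W \<noteq> {}
       \<and> (\<forall>e\<in>F. gt_src T e \<in> W \<and> gt_tgt T e \<in> W)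
       \<and> (\<forall>u\<in>W. \<forall>w\<in>W. (u, w) \<in> (adj_rel F (gt_src T) (gt_tgt T))\<^sup>*)
       \<and> (\<forall>g\<in>carrier (gt_grp T). gt_actV T g ` W \<subseteq> W \<and> gt_actE T g ` F \<subseteq> F)"
  proof (intro conjI)
    show "W \<subseteq> gt_V T" unfolding W_def using gt_actV_in[OF T _ x] ends FE by blast
    show "F \<subseteq> gt_E T" by (rule FE)
    have "x = gt_actV T \<one>\<^bsub>gt_grp T\<^esub> x" using gtD_oneV[OF T x] by simp
    then have "x \<in> W" unfolding W_def by blast
    then show "W \<noteq> {}" by blast
    show "\<forall>e\<in>F. gt_src T e \<in> W \<and> gt_tgt T e \<in> W" unfolding W_def by blast
    show "\<forall>u\<in>W. \<forall>w\<in>W. (u, w) \<in> (adj_rel F (gt_src T) (gt_tgt T))\<^sup>*"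
    proof (intro ballI)
      fix u w assume u: "u \<in> W" and w: "w \<in> W"
      have "(u, x) \<in> (adj_rel F (gt_src T) (gt_tgt T))\<^sup>*" by (rule adj_sym[OF Wconn[OF u]])
      moreover have "(x, w) \<in> (adj_rel F (gt_src T) (gt_tgt T))\<^sup>*" by (rule Wconn[OF w])
      ultimately show "(u, w) \<in> (adj_rel F (gt_src T) (gt_tgt T))\<^sup>*" by (rule rtrancl_trans)
    qed
    show "\<forall>g\<in>carrier (gt_grp T). gt_actV T g ` W \<subseteq> W \<and> gt_actE T g ` F \<subseteq> F"
    proof (intro ballI conjI)
      fix g assume g: "g \<in> carrier (gt_grp T)"
      show "gt_actE T g ` F \<subseteq> F" using Finv[OF g order.refl] .
      show "gt_actV T g ` W \<subseteq> W"
      proof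
        fix v assume "v \<in> gt_actV T g ` W"
        then obtain w where w: "w \<in> W" "v = gt_actV T g w" by blast
        from w(1)[unfolded W_def] show "v \<in> W"
        proof (elim UnE)
          assume "w \<in> {gt_actV T g x | g. g \<in> carrier (gt_grp T)}"
          then obtain h where h: "h \<in> carrier (gt_grp T)" "w = gt_actV T h x" by blast
          have "v = gt_actV T (g \<otimes>\<^bsub>gt_grp T\<^esub> h) x" using gtD_multV[OF T g h(1) x] h w(2) by simp
          moreover have "g \<otimes>\<^bsub>gt_grp T\<^esub> h \<in> carrier (gt_grp T)" using g h(1) by simp
          ultimately show ?thesis unfolding W_def by blast
        next
          assume "w \<in> gt_src T ` F"
          then obtain f where f: "f \<in> F" "w = gt_src T f" by blast
          have "v = gt_src T (gt_actE T g f)" using gtD_src[OF T g] f FE w(2) by auto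
          moreover have "gt_actE T g f \<in> F" using Finv[OF g order.refl] f(1) by blast
          ultimately show ?thesis unfolding W_def by blast
        next
          assume "w \<in> gt_tgt T ` F"
          then obtain f where f: "f \<in> F" "w = gt_tgt T f" by blast
          have "v = gt_tgt T (gt_actE T g f)" using gtD_tgt[OF T g] f FE w(2) by auto
          moreover have "gt_actE T g f \<in> F" using Finv[OF g order.refl] f(1) by blast
          ultimately show ?thesis unfolding W_def by blast
        qed
      qed
    qed
  qed
  have "W = gt_V T \<and> F = gt_E T"
    by (rule mn[unfolded minimal_gtree_def, rule_format, OF H])
  then have "\<forall>e\<in>gt_E T. \<exists>g\<in>carrier (gt_grp T). \<exists>r\<in>F0. e = gt_actE T g r"
    unfolding F_def by blast
  then show ?thesis using finF0 F0E by blast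
qed

lemma ballconj1: "\<forall>x\<in>A. P x \<and> Q x \<Longrightarrow> \<forall>x\<in>A. P x"
  by blast

lemma subdiv_obtain:
  assumes "subdiv_step T T' par"
  obtains e0 and k :: nat and piece where
    "k \<ge> 2" and
    "\<forall>e\<in>gt_E T - orbitE T e0. \<exists>!e'. e' \<in> gt_E T' \<and> par e' = e" and
    "\<forall>e\<in>orbitE T e0. {e'\<in>gt_E T'. par e' = e} = piece e ` {..<k}" and
    "\<forall>e'\<in>gt_E T'. par e' \<in> gt_E T" and
    "\<forall>g\<in>carrier (gt_grp T). \<forall>e'\<in>gt_E T'. par (gt_actE T' g e') = gt_actE T g (par e')" and
    "gt_grp T' = gt_grp T"
  using assms unfolding subdiv_step_def Let_def
  apply (elim conjE exE)
  apply (rule that)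
  apply assumption
  apply assumption
  apply (erule ballconj1)
  apply assumption
  apply assumption
  apply assumption
  done

lemma subdiv_D:
  assumes "subdiv_step T T' par"
  shows subdiv_grp: "gt_grp T' = gt_grp T"
    and subdiv_par: "\<forall>e'\<in>gt_E T'. par e' \<in> gt_E T"
    and subdiv_fin: "\<forall>e\<in>gt_E T. finite {e'\<in>gt_E T'. par e' = e} \<and> {e'\<in>gt_E T'. par e' = e} \<noteq> {}"
    and subdiv_eq: "\<forall>g\<in>carrier (gt_grp T). \<forall>e'\<in>gt_E T'. par (gt_actE T' g e') = gt_actE T g (par e')"
proof -
  obtain e0 and k :: nat and piece where
    k: "k \<ge> 2" and
    A: "\<forall>e\<in>gt_E T - orbitE T e0. \<exists>!e'. e' \<in> gt_E T' \<and> par e' = e" and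
    B: "\<forall>e\<in>orbitE T e0. {e'\<in>gt_E T'. par e' = e} = piece e ` {..<k}" and
    C: "\<forall>e'\<in>gt_E T'. par e' \<in> gt_E T" and
    D: "\<forall>g\<in>carrier (gt_grp T). \<forall>e'\<in>gt_E T'. par (gt_actE T' g e') = gt_actE T g (par e')" and
    grp: "gt_grp T' = gt_grp T"
    by (rule subdiv_obtain[OF assms])
  show "gt_grp T' = gt_grp T" by (rule grp)
  show "\<forall>e'\<in>gt_E T'. par e' \<in> gt_E T" by (rule C)
  show "\<forall>g\<in>carrier (gt_grp T). \<forall>e'\<in>gt_E T'. par (gt_actE T' g e') = gt_actE T g (par e')" by (rule D)
  show "\<forall>e\<in>gt_E T. finite {e'\<in>gt_E T'. par e' = e} \<and> {e'\<in>gt_E T'. par e' = e} \<noteq> {}"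
  proof
    fix e assume e: "e \<in> gt_E T"
    show "finite {e'\<in>gt_E T'. par e' = e} \<and> {e'\<in>gt_E T'. par e' = e} \<noteq> {}"
    proof (cases "e \<in> orbitE T e0")
      case True
      then have "{e'\<in>gt_E T'. par e' = e} = piece e ` {..<k}" using B by blast
      moreover have "piece e 0 \<in> piece e ` {..<k}" using k by simp
      then have "piece e ` {..<k} \<noteq> {}" by blast
      ultimately show ?thesis by simp
    next
      case False
      then obtain e' where e': "e' \<in> gt_E T'" "par e' = e" "\<And>y. y \<in> gt_E T' \<and> par y = e \<Longrightarrow> y = e'"
        using A e by blast
      then have "{e'\<in>gt_E T'. par e' = e} = {e'}" by blast
      then show ?thesis by simp
    qed
  qed
qed

lemma fold_D:
  assumes "fold_step T T' h \<phi> \<psi>"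
  shows fold_hom: "\<forall>g\<in>carrier (gt_grp T). h g \<in> carrier (gt_grp T')"
    and fold_surj: "\<psi> ` gt_E T = gt_E T'"
    and fold_eq: "\<forall>g\<in>carrier (gt_grp T). \<forall>e\<in>gt_E T. \<psi> (gt_actE T g e) = gt_actE T' (h g) (\<psi> e)"
proof -
  from assms have hom: "h \<in> hom (gt_grp T) (gt_grp T')" and su: "\<psi> ` gt_E T = gt_E T'"
    and eq: "\<forall>g\<in>carrier (gt_grp T). \<forall>e\<in>gt_E T. \<psi> (gt_actE T g e) = gt_actE T' (h g) (\<psi> e)"
    unfolding fold_step_def Let_def by (elim conjE exE; simp)+
  show "\<forall>g\<in>carrier (gt_grp T). h g \<in> carrier (gt_grp T')" using hom unfolding hom_def by blast
  show "\<psi> ` gt_E T = gt_E T'" by (rule su)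
  show "\<forall>g\<in>carrier (gt_grp T). \<forall>e\<in>gt_E T. \<psi> (gt_actE T g e) = gt_actE T' (h g) (\<psi> e)" by (rule eq)
qed

lemma fsD:
  assumes "folding_sequence S"
  shows fsD_gt: "is_gtree (fs_tree S n)"
    and fsD_fg: "fin_gen (gt_grp (fs_tree S n))"
    and fsD_min: "minimal_gtree (fs_tree S n)"
    and fsD_sub: "fs_sub S n \<Longrightarrow> subdiv_step (fs_tree S n) (fs_tree S (Suc n)) (fs_parent S n)"
    and fsD_fold: "\<not> fs_sub S n \<Longrightarrow> \<exists>h \<phi>. fold_step (fs_tree S n) (fs_tree S (Suc n)) h \<phi> (fs_emap S n)"
  using assms unfolding folding_sequence_def by (auto split: if_splits)

lemma subdiv_ne: "subdiv_step T T' par \<Longrightarrow> gt_E T \<noteq> {}"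
  apply (unfold subdiv_step_def)
  apply (elim conjE exE)
  apply blast
  done

lemma fold_ne: "fold_step T T' h \<phi> \<psi> \<Longrightarrow> gt_E T \<noteq> {}"
  apply (unfold fold_step_def is_fold_def)
  apply (elim conjE exE)
  apply blast
  done

lemma fs_ne:
  assumes FS: "folding_sequence S"
  shows "gt_E (fs_tree S n) \<noteq> {}"
proof (cases "fs_sub S n")
  case True
  show ?thesis by (rule subdiv_ne[OF fsD_sub[OF FS True]])
next
  case False
  obtain h \<phi> where "fold_step (fs_tree S n) (fs_tree S (Suc n)) h \<phi> (fs_emap S n)"
    using fsD_fold[OF FS False] by blast
  then show ?thesis by (rule fold_ne)
qed

lemma step_res:
  assumes FS: "folding_sequence S" and e: "e \<in> gt_E (fs_tree S n)"
  shows "finite (results S n e) \<and> results S n e \<noteq> {} \<and> results S n e \<subseteq> gt_E (fs_tree S (Suc n))"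
proof (cases "fs_sub S n")
  case True
  have sd: "subdiv_step (fs_tree S n) (fs_tree S (Suc n)) (fs_parent S n)" by (rule fsD_sub[OF FS True])
  have r: "results S n e = {e' \<in> gt_E (fs_tree S (Suc n)). fs_parent S n e' = e}"
    unfolding results_def using True by simp
  show ?thesis unfolding r using subdiv_fin[OF sd] e by blast
next
  case False
  obtain h \<phi> where fd: "fold_step (fs_tree S n) (fs_tree S (Suc n)) h \<phi> (fs_emap S n)"
    using fsD_fold[OF FS False] by blast
  have r: "results S n e = {fs_emap S n e}" using False by (simp add: results_def)
  show ?thesis unfolding r using fold_surj[OF fd] e by blast
qed

lemma step_surj:
  assumes FS: "folding_sequence S" and f: "f \<in> gt_E (fs_tree S (Suc n))"
  shows "\<exists>e\<in>gt_E (fs_tree S n). f \<in> results S n e"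
proof (cases "fs_sub S n")
  case True
  have sd: "subdiv_step (fs_tree S n) (fs_tree S (Suc n)) (fs_parent S n)" by (rule fsD_sub[OF FS True])
  have "fs_parent S n f \<in> gt_E (fs_tree S n)" using subdiv_par[OF sd] f by blast
  moreover have "f \<in> results S n (fs_parent S n f)" unfolding results_def using True f by simp
  ultimately show ?thesis by blast
next
  case False
  obtain h \<phi> where fd: "fold_step (fs_tree S n) (fs_tree S (Suc n)) h \<phi> (fs_emap S n)"
    using fsD_fold[OF FS False] by blast
  obtain e where "e \<in> gt_E (fs_tree S n)" "f = fs_emap S n e" using fold_surj[OF fd] f by blast
  moreover have "results S n e = {fs_emap S n e}" using False by (simp add: results_def)
  ultimately show ?thesis by blast
qed

lemma step_equiv:
  assumes FS: "folding_sequence S" and g: "g \<in> carrier (gt_grp (fs_tree S n))"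
    and e: "e \<in> gt_E (fs_tree S n)"
  shows "\<exists>g'\<in>carrier (gt_grp (fs_tree S (Suc n))).
           results S n (gt_actE (fs_tree S n) g e) = gt_actE (fs_tree S (Suc n)) g' ` results S n e"
proof (cases "fs_sub S n")
  case True
  let ?T = "fs_tree S n" and ?T' = "fs_tree S (Suc n)" and ?p = "fs_parent S n"
  have sd: "subdiv_step ?T ?T' ?p" by (rule fsD_sub[OF FS True])
  have T: "is_gtree ?T" and T': "is_gtree ?T'" using fsD_gt[OF FS] by blast+
  have grp: "gt_grp ?T' = gt_grp ?T" by (rule subdiv_grp[OF sd])
  have g': "g \<in> carrier (gt_grp ?T')" using g grp by simp
  have par: "\<And>e'. e' \<in> gt_E ?T' \<Longrightarrow> ?p e' \<in> gt_E ?T" using subdiv_par[OF sd] by blast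
  have peq: "\<And>g e'. g \<in> carrier (gt_grp ?T) \<Longrightarrow> e' \<in> gt_E ?T' \<Longrightarrow> ?p (gt_actE ?T' g e') = gt_actE ?T g (?p e')"
    using subdiv_eq[OF sd] by blast
  interpret G: group "gt_grp ?T" by (rule gtD_group[OF T])
  have r: "\<And>x. results S n x = {e' \<in> gt_E ?T'. ?p e' = x}" unfolding results_def using True by simp
  have "results S n (gt_actE ?T g e) = gt_actE ?T' g ` results S n e"
  proof
    show "gt_actE ?T' g ` results S n e \<subseteq> results S n (gt_actE ?T g e)"
    proof
      fix f assume "f \<in> gt_actE ?T' g ` results S n e"
      then obtain e' where e': "e' \<in> gt_E ?T'" "?p e' = e" "f = gt_actE ?T' g e'" unfolding r by blast
      have "f \<in> gt_E ?T'" using gt_actE_in[OF T' g' e'(1)] e'(3) by simp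
      moreover have "?p f = gt_actE ?T g e" using peq[OF g e'(1)] e' by simp
      ultimately show "f \<in> results S n (gt_actE ?T g e)" unfolding r by blast
    qed
    show "results S n (gt_actE ?T g e) \<subseteq> gt_actE ?T' g ` results S n e"
    proof
      fix f assume "f \<in> results S n (gt_actE ?T g e)"
      then have f: "f \<in> gt_E ?T'" "?p f = gt_actE ?T g e" unfolding r by blast+
      define gi where "gi = inv\<^bsub>gt_grp ?T\<^esub> g"
      have gi: "gi \<in> carrier (gt_grp ?T)" unfolding gi_def using g by simp
      have gi': "gi \<in> carrier (gt_grp ?T')" using gi grp by simp
      define f0 where "f0 = gt_actE ?T' gi f"
      have f0E: "f0 \<in> gt_E ?T'" unfolding f0_def using gt_actE_in[OF T' gi' f(1)] .
      have "?p f0 = gt_actE ?T gi (gt_actE ?T g e)" unfolding f0_def using peq[OF gi f(1)] f(2) by simp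
      also have "\<dots> = gt_actE ?T (gi \<otimes>\<^bsub>gt_grp ?T\<^esub> g) e" using gtD_multE[OF T gi g e] by simp
      also have "\<dots> = e" unfolding gi_def using g gtD_oneE[OF T e] by simp
      finally have pf0: "?p f0 = e" .
      have "gt_actE ?T' g f0 = gt_actE ?T' (g \<otimes>\<^bsub>gt_grp ?T'\<^esub> gi) f"
        unfolding f0_def using gtD_multE[OF T' g' gi' f(1)] by simp
      also have "\<dots> = f" unfolding gi_def grp using g gtD_oneE[OF T' f(1)] grp by simp
      finally have "f = gt_actE ?T' g f0" by simp
      moreover have "f0 \<in> results S n e" unfolding r using f0E pf0 by blast
      ultimately show "f \<in> gt_actE ?T' g ` results S n e" by blast
    qed
  qed
  then show ?thesis using g' by blast
next
  case False
  obtain h \<phi> where fd: "fold_step (fs_tree S n) (fs_tree S (Suc n)) h \<phi> (fs_emap S n)"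
    using fsD_fold[OF FS False] by blast
  have r: "\<And>x. results S n x = {fs_emap S n x}" using False by (simp add: results_def)
  have hg: "h g \<in> carrier (gt_grp (fs_tree S (Suc n)))" using fold_hom[OF fd] g by blast
  have "fs_emap S n (gt_actE (fs_tree S n) g e) = gt_actE (fs_tree S (Suc n)) (h g) (fs_emap S n e)"
    using fold_eq[OF fd] g e by blast
  then have "results S n (gt_actE (fs_tree S n) g e) = gt_actE (fs_tree S (Suc n)) (h g) ` results S n e"
    unfolding r by simp
  then show ?thesis using hg by blast
qed

lemma sum_res_inv:
  assumes FS: "folding_sequence S" and g: "g \<in> carrier (gt_grp (fs_tree S n))"
    and e: "e \<in> gt_E (fs_tree S n)"
    and inv: "\<forall>g'\<in>carrier (gt_grp (fs_tree S (Suc n))). \<forall>f\<in>gt_E (fs_tree S (Suc n)).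
                 L (gt_actE (fs_tree S (Suc n)) g' f) = (L f :: real)"
  shows "(\<Sum>x\<in>results S n (gt_actE (fs_tree S n) g e). L x) = (\<Sum>x\<in>results S n e. L x)"
proof -
  obtain g' where g': "g' \<in> carrier (gt_grp (fs_tree S (Suc n)))"
    and eq: "results S n (gt_actE (fs_tree S n) g e) = gt_actE (fs_tree S (Suc n)) g' ` results S n e"
    using step_equiv[OF FS g e] by blast
  have sub: "results S n e \<subseteq> gt_E (fs_tree S (Suc n))" using step_res[OF FS e] by blast
  have T': "is_gtree (fs_tree S (Suc n))" by (rule fsD_gt[OF FS])
  have "inj_on (gt_actE (fs_tree S (Suc n)) g') (gt_E (fs_tree S (Suc n)))"
    using gtD_bijE[OF T' g'] unfolding bij_betw_def by blast
  then have inj: "inj_on (gt_actE (fs_tree S (Suc n)) g') (results S n e)"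
    using sub inj_on_subset by blast
  have "(\<Sum>x\<in>results S n (gt_actE (fs_tree S n) g e). L x)
        = (\<Sum>x\<in>results S n e. L (gt_actE (fs_tree S (Suc n)) g' x))"
    unfolding eq using sum.reindex[OF inj, of L] by simp
  also have "\<dots> = (\<Sum>x\<in>results S n e. L x)"
    using inv g' sub by (intro sum.cong) auto
  finally show ?thesis .
qed

lemma compact_box: "compact {L :: 'a \<Rightarrow> real. \<forall>i. L i \<in> {0..1}}"
proof -
  have "compactin (product_topology (\<lambda>_. euclidean) (UNIV::'a set)) (PiE UNIV (\<lambda>_. {0..1::real}))"
    by (simp add: compactin_PiE)
  then have c: "compact (PiE (UNIV::'a set) (\<lambda>_. {0..1::real}))"
    by (simp add: euclidean_product_topology)
  have eq: "PiE UNIV (\<lambda>_. {0..1::real}) = {L :: 'a \<Rightarrow> real. \<forall>i. L i \<in> {0..1}}"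
    by (auto simp: PiE_def Pi_def extensional_def)
  show ?thesis using c unfolding eq .
qed
lemma back_props:
  assumes FS: "folding_sequence S"
    and rec: "\<forall>n<M. \<forall>e\<in>gt_E (fs_tree S n). b n e = (\<Sum>x\<in>results S n e. b (Suc n) x)"
    and top: "\<forall>e\<in>gt_E (fs_tree S M). b M e = (1::real)"
    and nM: "n \<le> M"
  shows "(\<forall>e\<in>gt_E (fs_tree S n). b n e > 0) \<and>
         (\<forall>g\<in>carrier (gt_grp (fs_tree S n)). \<forall>e\<in>gt_E (fs_tree S n).
             b n (gt_actE (fs_tree S n) g e) = b n e)"
proof -
  have main: "(\<forall>e\<in>gt_E (fs_tree S (M - k)). b (M - k) e > 0) \<and>
         (\<forall>g\<in>carrier (gt_grp (fs_tree S (M - k))). \<forall>e\<in>gt_E (fs_tree S (M - k)).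
             b (M - k) (gt_actE (fs_tree S (M - k)) g e) = b (M - k) e)" if "k \<le> M" for k
    using that
  proof (induction k)
    case 0
    have T: "is_gtree (fs_tree S M)" by (rule fsD_gt[OF FS])
    show ?case using top gt_actE_in[OF T] by simp
  next
    case (Suc k)
    define n where "n = M - Suc k"
    have n1: "M - k = Suc n" unfolding n_def using Suc.prems by simp
    have nM: "n < M" unfolding n_def using Suc.prems by simp
    have IH: "(\<forall>e\<in>gt_E (fs_tree S (Suc n)). b (Suc n) e > 0) \<and>
         (\<forall>g\<in>carrier (gt_grp (fs_tree S (Suc n))). \<forall>e\<in>gt_E (fs_tree S (Suc n)).
             b (Suc n) (gt_actE (fs_tree S (Suc n)) g e) = b (Suc n) e)"
      using Suc.IH Suc.prems n1 by simp
    have T: "is_gtree (fs_tree S n)" by (rule fsD_gt[OF FS])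
    have pos: "\<forall>e\<in>gt_E (fs_tree S n). b n e > 0"
    proof
      fix e assume e: "e \<in> gt_E (fs_tree S n)"
      have r: "finite (results S n e)" "results S n e \<noteq> {}" "results S n e \<subseteq> gt_E (fs_tree S (Suc n))"
        using step_res[OF FS e] by blast+
      have "0 < (\<Sum>x\<in>results S n e. b (Suc n) x)"
        by (rule sum_pos[OF r(1) r(2)]) (use IH r(3) in blast)
      then show "b n e > 0" using rec nM e by simp
    qed
    have inv: "\<forall>g\<in>carrier (gt_grp (fs_tree S n)). \<forall>e\<in>gt_E (fs_tree S n).
             b n (gt_actE (fs_tree S n) g e) = b n e"
    proof (intro ballI)
      fix g e assume g: "g \<in> carrier (gt_grp (fs_tree S n))" and e: "e \<in> gt_E (fs_tree S n)"
      have ge: "gt_actE (fs_tree S n) g e \<in> gt_E (fs_tree S n)" by (rule gt_actE_in[OF T g e])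
      have "b n (gt_actE (fs_tree S n) g e) = (\<Sum>x\<in>results S n (gt_actE (fs_tree S n) g e). b (Suc n) x)"
        using rec nM ge by simp
      also have "\<dots> = (\<Sum>x\<in>results S n e. b (Suc n) x)"
        by (rule sum_res_inv[OF FS g e]) (use IH in blast)
      also have "\<dots> = b n e" using rec nM e by simp
      finally show "b n (gt_actE (fs_tree S n) g e) = b n e" .
    qed
    show ?case using pos inv unfolding n_def by simp
  qed
  have "M - (M - n) = n" using nM by simp
  then show ?thesis using main[of "M - n"] by simp
qed

theorem theorem3p1:
  fixes S :: "('g, 'v, 'e) fseq"
  assumes "folding_sequence S" and "irreducible_fseq S"
  shows "\<exists>len :: nat \<Rightarrow> 'e \<Rightarrow> real. \<forall>n. \<forall>e\<in>gt_E (fs_tree S n).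
           len n e > 0
         \<and> (\<forall>g\<in>carrier (gt_grp (fs_tree S n)). len n (gt_actE (fs_tree S n) g e) = len n e)
         \<and> (\<Sum>e'\<in>results S n e. len (Suc n) e') = len n e"
proof -
  note FS = assms(1)
  obtain R where RR: "finite R \<and> R \<subseteq> gt_E (fs_tree S 0) \<and>
    (\<forall>e\<in>gt_E (fs_tree S 0). \<exists>g\<in>carrier (gt_grp (fs_tree S 0)). \<exists>r\<in>R. e = gt_actE (fs_tree S 0) g r)"
    using finite_orbits[OF fsD_gt[OF FS, of 0] fsD_fg[OF FS, of 0] fsD_min[OF FS, of 0]] by (elim exE) (rule that)
  note R = conjunct1[OF RR] conjunct1[OF conjunct2[OF RR]] conjunct2[OF conjunct2[OF RR]]
  obtain e00 where e00: "e00 \<in> gt_E (fs_tree S 0)" using fs_ne[OF FS, of 0] by blast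
  obtain g00 r00 where "r00 \<in> R" "e00 = gt_actE (fs_tree S 0) g00 r00" using R(3) e00 by blast
  then have Rne: "R \<noteq> {}" by blast
  define K where "K M = {L :: nat \<times> 'e \<Rightarrow> real.
      (\<forall>n<M. \<forall>e\<in>gt_E (fs_tree S n). L (n, e) = (\<Sum>x\<in>results S n e. L (Suc n, x)))
    \<and> (\<forall>n\<le>M. \<forall>g\<in>carrier (gt_grp (fs_tree S n)). \<forall>e\<in>gt_E (fs_tree S n).
          L (n, gt_actE (fs_tree S n) g e) = L (n, e))
    \<and> (\<Sum>r\<in>R. L (0, r)) = 1}" for M
  define C where "C = {L :: nat \<times> 'e \<Rightarrow> real. \<forall>i. L i \<in> {0..1}}"
  have Ccomp: "compact C" unfolding C_def by (rule compact_box)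
  have Kclosed: "closed (K M)" for M
  proof -
    have "K M = (\<Inter>n\<in>{..<M}. \<Inter>e\<in>gt_E (fs_tree S n). {L. L (n, e) = (\<Sum>x\<in>results S n e. L (Suc n, x))})
       \<inter> (\<Inter>n\<in>{..M}. \<Inter>g\<in>carrier (gt_grp (fs_tree S n)). \<Inter>e\<in>gt_E (fs_tree S n).
              {L. L (n, gt_actE (fs_tree S n) g e) = L (n, e)})
       \<inter> {L. (\<Sum>r\<in>R. L (0, r)) = 1}"
      unfolding K_def by auto
    moreover have "closed ((\<Inter>n\<in>{..<M}. \<Inter>e\<in>gt_E (fs_tree S n). {L :: nat \<times> 'e \<Rightarrow> real. L (n, e) = (\<Sum>x\<in>results S n e. L (Suc n, x))})
       \<inter> (\<Inter>n\<in>{..M}. \<Inter>g\<in>carrier (gt_grp (fs_tree S n)). \<Inter>e\<in>gt_E (fs_tree S n).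
              {L. L (n, gt_actE (fs_tree S n) g e) = L (n, e)})
       \<inter> {L. (\<Sum>r\<in>R. L (0, r)) = 1})"
      by (intro closed_Int closed_INT ballI closed_Collect_eq continuous_intros continuous_on_product_coordinates)
    ultimately show ?thesis by simp
  qed
  have Kmono: "K M \<subseteq> K m" if "m \<le> M" for m M
    using that unfolding K_def by auto
  have Kne: "C \<inter> K M \<noteq> {}" for M
  proof -
    define bk where "bk = rec_nat (\<lambda>e::'e. 1::real) (\<lambda>k f e. \<Sum>x\<in>results S (M - Suc k) e. f x)"
    have bk0: "bk 0 = (\<lambda>e. 1)" unfolding bk_def by simp
    have bkS: "bk (Suc k) e = (\<Sum>x\<in>results S (M - Suc k) e. bk k x)" for k e unfolding bk_def by simp
    define b where "b n = bk (M - n)" for n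
    have rec: "\<forall>n<M. \<forall>e\<in>gt_E (fs_tree S n). b n e = (\<Sum>x\<in>results S n e. b (Suc n) x)"
    proof (intro allI impI ballI)
      fix n e assume n: "n < M"
      have 1: "M - n = Suc (M - Suc n)" using n by simp
      have 2: "M - Suc (M - Suc n) = n" using n by simp
      show "b n e = (\<Sum>x\<in>results S n e. b (Suc n) x)"
        unfolding b_def 1 bkS 2 ..
    qed
    have top: "\<forall>e\<in>gt_E (fs_tree S M). b M e = 1" unfolding b_def using bk0 by simp
    have bpos: "b n e > 0" if "n \<le> M" "e \<in> gt_E (fs_tree S n)" for n e
      using back_props[OF FS rec top that(1)] that(2) by blast
    have binv: "b n (gt_actE (fs_tree S n) g e) = b n e"
      if "n \<le> M" "g \<in> carrier (gt_grp (fs_tree S n))" "e \<in> gt_E (fs_tree S n)" for n g e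
      using back_props[OF FS rec top that(1)] that(2,3) by blast
    define c where "c = (\<Sum>r\<in>R. b 0 r)"
    have cpos: "c > 0" unfolding c_def
      by (rule sum_pos[OF R(1) Rne]) (use R(2) bpos in blast)
    have b0le: "b 0 e \<le> c" if e: "e \<in> gt_E (fs_tree S 0)" for e
    proof -
      obtain g r where g: "g \<in> carrier (gt_grp (fs_tree S 0))" and r: "r \<in> R" and er: "e = gt_actE (fs_tree S 0) g r"
        using R(3) e by blast
      have rE: "r \<in> gt_E (fs_tree S 0)" using r R(2) by blast
      have "b 0 e = b 0 r" unfolding er by (rule binv[OF _ g rE]) simp
      also have "\<dots> \<le> c" unfolding c_def
        by (rule member_le_sum[OF r _ R(1)]) (use R(2) bpos in force)
      finally show ?thesis .
    qed
    have bup: "\<exists>e\<in>gt_E (fs_tree S 0). b n f \<le> b 0 e" if "n \<le> M" "f \<in> gt_E (fs_tree S n)" for n f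
      using that
    proof (induction n arbitrary: f)
      case 0
      then show ?case by blast
    next
      case (Suc n)
      obtain e where e: "e \<in> gt_E (fs_tree S n)" "f \<in> results S n e" using step_surj[OF FS Suc.prems(2)] by blast
      have r: "finite (results S n e)" "results S n e \<subseteq> gt_E (fs_tree S (Suc n))"
        using step_res[OF FS e(1)] by blast+
      have "b (Suc n) f \<le> (\<Sum>x\<in>results S n e. b (Suc n) x)"
        by (rule member_le_sum[OF e(2) _ r(1)]) (use r(2) bpos Suc.prems(1) in force)
      also have "\<dots> = b n e" using rec Suc.prems(1) e(1) by simp
      finally have le: "b (Suc n) f \<le> b n e" .
      obtain e0 where "e0 \<in> gt_E (fs_tree S 0)" "b n e \<le> b 0 e0" using Suc.IH[of e] Suc.prems(1) e(1) by auto
      then show ?case using le by force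
    qed
    define L where "L = (\<lambda>(n, e). if n \<le> M \<and> e \<in> gt_E (fs_tree S n) then b n e / c else 0)"
    have LC: "L \<in> C"
    proof -
      have "L (n, e) \<in> {0..1}" for n e
      proof (cases "n \<le> M \<and> e \<in> gt_E (fs_tree S n)")
        case True
        obtain e0 where e0: "e0 \<in> gt_E (fs_tree S 0)" "b n e \<le> b 0 e0" using bup True by blast
        have "b n e \<le> c" using e0 b0le by force
        moreover have "b n e > 0" using bpos True by blast
        ultimately show ?thesis unfolding L_def using True cpos by simp
      next
        case False
        then show ?thesis unfolding L_def by auto
      qed
      then show ?thesis unfolding C_def by auto
    qed
    have LK: "L \<in> K M"
    proof -
      have A: "\<forall>n<M. \<forall>e\<in>gt_E (fs_tree S n). L (n, e) = (\<Sum>x\<in>results S n e. L (Suc n, x))"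
      proof (intro allI impI ballI)
        fix n e assume n: "n < M" and e: "e \<in> gt_E (fs_tree S n)"
        have r: "results S n e \<subseteq> gt_E (fs_tree S (Suc n))" using step_res[OF FS e] by blast
        have "L (n, e) = b n e / c" unfolding L_def using n e by simp
        also have "\<dots> = (\<Sum>x\<in>results S n e. b (Suc n) x) / c" using rec n e by simp
        also have "\<dots> = (\<Sum>x\<in>results S n e. b (Suc n) x / c)" by (rule sum_divide_distrib)
        also have "\<dots> = (\<Sum>x\<in>results S n e. L (Suc n, x))"
          using r n unfolding L_def by (intro sum.cong) auto
        finally show "L (n, e) = (\<Sum>x\<in>results S n e. L (Suc n, x))" .
      qed
      have B: "\<forall>n\<le>M. \<forall>g\<in>carrier (gt_grp (fs_tree S n)). \<forall>e\<in>gt_E (fs_tree S n).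
          L (n, gt_actE (fs_tree S n) g e) = L (n, e)"
      proof (intro allI impI ballI)
        fix n g e assume n: "n \<le> M" and g: "g \<in> carrier (gt_grp (fs_tree S n))" and e: "e \<in> gt_E (fs_tree S n)"
        have ge: "gt_actE (fs_tree S n) g e \<in> gt_E (fs_tree S n)" by (rule gt_actE_in[OF fsD_gt[OF FS] g e])
        show "L (n, gt_actE (fs_tree S n) g e) = L (n, e)"
          unfolding L_def using n e ge binv[OF n g e] by simp
      qed
      have "(\<Sum>r\<in>R. L (0, r)) = (\<Sum>r\<in>R. b 0 r / c)"
        using R(2) unfolding L_def by (intro sum.cong) auto
      also have "\<dots> = c / c" unfolding c_def by (rule sum_divide_distrib[symmetric])
      also have "\<dots> = 1" using cpos by simp
      finally have D: "(\<Sum>r\<in>R. L (0, r)) = 1" .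
      show ?thesis unfolding K_def using A B D by blast
    qed
    show ?thesis using LC LK by blast
  qed
  have "C \<inter> (\<Inter>M\<in>UNIV. K M) \<noteq> {}"
  proof (rule compact_imp_fip_image[OF Ccomp])
    show "closed (K M)" if "M \<in> UNIV" for M by (rule Kclosed)
    fix I' :: "nat set" assume fin: "finite I'" and "I' \<subseteq> UNIV"
    define M where "M = Max (insert 0 I')"
    have "K M \<subseteq> K i" if "i \<in> I'" for i
      using Kmono[of i M] that fin unfolding M_def by simp
    then have "C \<inter> K M \<subseteq> C \<inter> (\<Inter>i\<in>I'. K i)" by blast
    then show "C \<inter> (\<Inter>i\<in>I'. K i) \<noteq> {}" using Kne[of M] by blast
  qed
  then obtain L where LC: "L \<in> C" and LK: "\<And>M. L \<in> K M" by blast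
  have nonneg: "0 \<le> L (n, e)" for n e using LC unfolding C_def by auto
  have cons: "L (n, e) = (\<Sum>x\<in>results S n e. L (Suc n, x))" if "e \<in> gt_E (fs_tree S n)" for n e
    using LK[of "Suc n"] that unfolding K_def by blast
  have inv: "L (n, gt_actE (fs_tree S n) g e) = L (n, e)"
    if "g \<in> carrier (gt_grp (fs_tree S n))" "e \<in> gt_E (fs_tree S n)" for n g e
    using LK[of n] that unfolding K_def by blast
  have norm: "(\<Sum>r\<in>R. L (0, r)) = 1" using LK[of 0] unfolding K_def by blast
  have nz: "\<exists>e\<in>gt_E (fs_tree S m). L (m, e) \<noteq> 0" for m
  proof (induction m)
    case 0
    show ?case
    proof (rule ccontr)
      assume "\<not> ?case"
      then have "\<forall>r\<in>R. L (0, r) = 0" using R(2) by blast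
      then have "(\<Sum>r\<in>R. L (0, r)) = 0" by simp
      then show False using norm by simp
    qed
  next
    case (Suc m)
    then obtain e where e: "e \<in> gt_E (fs_tree S m)" "L (m, e) \<noteq> 0" by blast
    have r: "results S m e \<subseteq> gt_E (fs_tree S (Suc m))" using step_res[OF FS e(1)] by blast
    show ?case
    proof (rule ccontr)
      assume "\<not> ?case"
      then have "\<forall>x\<in>results S m e. L (Suc m, x) = 0" using r by blast
      then have "(\<Sum>x\<in>results S m e. L (Suc m, x)) = 0" by simp
      then show False using cons[OF e(1)] e(2) by simp
    qed
  qed
  have pos: "L (n, e) > 0" if e: "e \<in> gt_E (fs_tree S n)" for n e
  proof (rule ccontr)
    assume "\<not> L (n, e) > 0"
    then have z: "L (n, e) = 0" using nonneg[of n e] by simp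
    define Es where "Es m = {e \<in> gt_E (fs_tree S m). L (m, e) = 0}" for m
    have resEs: "results S m x \<subseteq> Es (Suc m)" if x: "x \<in> Es m" for m x
    proof -
      have xE: "x \<in> gt_E (fs_tree S m)" and x0: "L (m, x) = 0" using x unfolding Es_def by blast+
      have r: "finite (results S m x)" "results S m x \<subseteq> gt_E (fs_tree S (Suc m))"
        using step_res[OF FS xE] by blast+
      have "(\<Sum>y\<in>results S m x. L (Suc m, y)) = 0" using cons[OF xE] x0 by simp
      then have "\<forall>y\<in>results S m x. L (Suc m, y) = 0"
        using sum_nonneg_eq_0_iff[OF r(1), of "\<lambda>y. L (Suc m, y)"] nonneg by blast
      then show ?thesis using r(2) unfolding Es_def by blast
    qed
    have ne: "Es m \<noteq> {}" if "n \<le> m" for m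
      using that
    proof (induction m rule: dec_induct)
      case base
      then show ?case using e z unfolding Es_def by blast
    next
      case (step m)
      then obtain x where x: "x \<in> Es m" by blast
      then have xE: "x \<in> gt_E (fs_tree S m)" unfolding Es_def by blast
      have "results S m x \<noteq> {}" using step_res[OF FS xE] by blast
      then show ?case using resEs[OF x] by blast
    qed
    have "reducible_fseq S"
      unfolding reducible_fseq_def
    proof (intro exI allI impI conjI)
      fix m assume m: "n \<le> m"
      show "Es m \<subset> gt_E (fs_tree S m)"
      proof
        show "Es m \<subseteq> gt_E (fs_tree S m)" unfolding Es_def by blast
        show "Es m \<noteq> gt_E (fs_tree S m)" using nz[of m] unfolding Es_def by blast
      qed
      show "Es m \<noteq> {}" by (rule ne[OF m])
      show "\<forall>g\<in>carrier (gt_grp (fs_tree S m)). gt_actE (fs_tree S m) g ` Es m \<subseteq> Es m"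
      proof (intro ballI subsetI)
        fix g y assume g: "g \<in> carrier (gt_grp (fs_tree S m))" and y: "y \<in> gt_actE (fs_tree S m) g ` Es m"
        then obtain x where x: "x \<in> gt_E (fs_tree S m)" "L (m, x) = 0" "y = gt_actE (fs_tree S m) g x"
          unfolding Es_def by blast
        have "y \<in> gt_E (fs_tree S m)" using gt_actE_in[OF fsD_gt[OF FS] g x(1)] x(3) by simp
        moreover have "L (m, y) = 0" using inv[OF g x(1)] x by simp
        ultimately show "y \<in> Es m" unfolding Es_def by blast
      qed
      show "\<forall>x\<in>Es m. results S m x \<subseteq> Es (Suc m)" using resEs by blast
    qed
    then show False using assms(2) unfolding irreducible_fseq_def by simp
  qed
  have fin: "\<forall>n. \<forall>e\<in>gt_E (fs_tree S n). 0 < L (n, e)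
     \<and> (\<forall>g\<in>carrier (gt_grp (fs_tree S n)). L (n, gt_actE (fs_tree S n) g e) = L (n, e))
     \<and> (\<Sum>e'\<in>results S n e. L (Suc n, e')) = L (n, e)"
  proof (intro allI ballI)
    fix n e assume e: "e \<in> gt_E (fs_tree S n)"
    have "\<forall>g\<in>carrier (gt_grp (fs_tree S n)). L (n, gt_actE (fs_tree S n) g e) = L (n, e)"
      using inv e by blast
    then show "0 < L (n, e)
     \<and> (\<forall>g\<in>carrier (gt_grp (fs_tree S n)). L (n, gt_actE (fs_tree S n) g e) = L (n, e))
     \<and> (\<Sum>e'\<in>results S n e. L (Suc n, e')) = L (n, e)"
      using pos[OF e] cons[OF e] by simp
  qed
  show ?thesis using fin by (intro exI[of _ "\<lambda>n e. L (n, e)"])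
qed

end
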